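(* For every $N$-partite pure state $\left|\psi\right\rangle\in\mathbb{C}^{d_1}\otimes\cdots\otimes\mathbb{C}^{d_N}$, $$E_{MB}(\left|\psi\right\rangle)\ \ge\ E_R(\left|\psi\right\rangle).$$ More precisely, if an adaptive local measurement scheme with product outcome vectors $|e_{\mathbf{i}}\rangle=|\phi^{(1)}_{i_1}\rangle\otimes\cdots\otimes|\phi^{(N)}_{i_N|i_1\dots i_{N-1}}\rangle$ has outcome distribution $\mathbf{p}$, then the fully separable state $\omega=\sum_{\mathbf{i}}p_{\mathbf{i}}|e_{\mathbf{i}}\rangle\langle e_{\mathbf{i}}|$ satisfies $-\langle\psi|\log_2\omega|\psi\rangle=H(\mathbf{p})$.
   Context: Entanglement measurement bound (EMB). Let $\left|\psi\right\rangle$ be a unit vector in $\mathcal{H}_1\otimes\cdots\otimes\mathcal{H}_N$, $\mathcal{H}_j=\mathbb{C}^{d_j}$. An adaptive local measurement scheme consists of: an ordering $\pi$ of the parties $\{1,\dots,N\}$; an orthonormal basis $\{|\phi^{(1)}_{i_1}\rangle\}_{i_1}$ of $\mathcal{H}_{\pi(1)}$; and, for each $k=2,\dots,N$ and each outcome history $(i_1,\dots,i_{k-1})$, an orthonormal basis $\{|\phi^{(k)}_{i_k|i_1\dots i_{k-1}}\rangle\}_{i_k}$ of $\mathcal{H}_{\pi(k)}$ (which may depend on the history). Its outcome distribution is $p_{i_1\dots i_N}=\big|\big(\langle\phi^{(1)}_{i_1}|\otimes\langle\phi^{(2)}_{i_2|i_1}|\otimes\cdots\otimes\langle\phi^{(N)}_{i_N|i_1\dots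 i_{N-1}}|\big)\left|\psi\right\rangle\big|^2$, where the $k$-th bra acts on the tensor factor of party $\pi(k)$. The EMB is $E_{MB}(\left|\psi\right\rangle)=\min H(\mathbf{p})$, where $H(\mathbf{p})=-\sum p_{i_1\dots i_N}\log_2 p_{i_1\dots i_N}$ is the Shannon entropy and the minimum is over all adaptive local measurement schemes (including all orderings of the parties). Relative entropy of entanglement: $E_R(\left|\psi\right\rangle)=\min_{\sigma}\big(-\langle\psi|\log_2\sigma|\psi\rangle\big)$, the minimum over all fully separable states $\sigma$ (convex combinations of $N$-fold product states $\sigma_1\otimes\cdots\otimes\sigma_N$), with the convention that the value is $+\infty$ if $\left|\psi\right\rangle\notin\mathrm{supp}\,\sigma$. *)

theory Defs
  imports "HOL-Analysis.Analysis"
begin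

text \<open>Parties are indexed by 0..N-1. A basis multi-index is a function x with x j < d j
  for j < N (extensional outside). Vectors are functions from multi-indices to complex numbers,
  operators are (matrix-entry) functions of two multi-indices.\<close>

definition tidx :: "nat \<Rightarrow> (nat \<Rightarrow> nat) \<Rightarrow> (nat \<Rightarrow> nat) set" where
  "tidx N d = PiE {..<N} (\<lambda>j. {..<d j})"

definition unit_vec :: "'i set \<Rightarrow> ('i \<Rightarrow> complex) \<Rightarrow> bool" where
  "unit_vec S v \<longleftrightarrow> (\<Sum>x\<in>S. (cmod (v x))\<^sup>2) = 1"

definition braket :: "'i set \<Rightarrow> ('i \<Rightarrow> complex) \<Rightarrow> ('i \<Rightarrow> complex) \<Rightarrow> complex" where
  "braket S u v = (\<Sum>x\<in>S. cnj (u x) * v x)"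

definition orthonormal_basis :: "'i set \<Rightarrow> ('i \<Rightarrow> 'i \<Rightarrow> complex) \<Rightarrow> bool" where
  "orthonormal_basis S b \<longleftrightarrow>
     (\<forall>k\<in>S. \<forall>l\<in>S. braket S (b k) (b l) = (if k = l then 1 else 0))"

definition density_matrix :: "'i set \<Rightarrow> ('i \<Rightarrow> 'i \<Rightarrow> complex) \<Rightarrow> bool" where
  "density_matrix S \<rho> \<longleftrightarrow>
     (\<forall>x\<in>S. \<forall>y\<in>S. \<rho> y x = cnj (\<rho> x y)) \<and>
     (\<forall>v. Re (\<Sum>x\<in>S. \<Sum>y\<in>S. cnj (v x) * \<rho> x y * v y) \<ge> 0) \<and>
     (\<Sum>x\<in>S. \<rho> x x) = 1"

definition fully_separable :: "nat \<Rightarrow> (nat \<Rightarrow> nat) \<Rightarrow> ((nat \<Rightarrow> nat) \<Rightarrow> (nat \<Rightarrow> nat) \<Rightarrow> complex) \<Rightarrow> bool" where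
  "fully_separable N d \<sigma> \<longleftrightarrow>
     (\<exists>(m::nat) (w::nat \<Rightarrow> real) (\<rho>::nat \<Rightarrow> nat \<Rightarrow> nat \<Rightarrow> nat \<Rightarrow> complex).
        (\<forall>k<m. w k \<ge> 0) \<and> (\<Sum>k<m. w k) = 1 \<and>
        (\<forall>k<m. \<forall>j<N. density_matrix {..<d j} (\<rho> k j)) \<and>
        (\<forall>x\<in>tidx N d. \<forall>y\<in>tidx N d.
            \<sigma> x y = (\<Sum>k<m. complex_of_real (w k) * (\<Prod>j<N. \<rho> k j (x j) (y j)))))"

text \<open>The quantity  - <psi| log_2 sigma |psi>, defined through a spectral decomposition
  sigma = sum_k lambda_k |v_k><v_k| (orthonormal eigenbasis v indexed by S):
  it is +infinity if psi has a component along an eigenvector with eigenvalue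
  lambda_k <= 0 (i.e. psi is not in the support), and otherwise
  sum_{lambda_k > 0} |<v_k|psi>|^2 (- log_2 lambda_k).\<close>
definition neg_log_qf :: "'i set \<Rightarrow> ('i \<Rightarrow> 'i \<Rightarrow> complex) \<Rightarrow> ('i \<Rightarrow> complex) \<Rightarrow> ereal" where
  "neg_log_qf S \<sigma> \<psi> =
     (let (v, lam) = (SOME (v, lam). orthonormal_basis S v \<and>
             (\<forall>x\<in>S. \<forall>y\<in>S. \<sigma> x y = (\<Sum>k\<in>S. complex_of_real (lam k) * v k x * cnj (v k y))))
      in if (\<exists>k\<in>S. lam k \<le> 0 \<and> braket S (v k) \<psi> \<noteq> 0) then \<infinity>
         else ereal (\<Sum>k\<in>{k\<in>S. lam k > 0}. (cmod (braket S (v k) \<psi>))\<^sup>2 * (- log 2 (lam k))))"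

definition E_R :: "nat \<Rightarrow> (nat \<Rightarrow> nat) \<Rightarrow> ((nat \<Rightarrow> nat) \<Rightarrow> complex) \<Rightarrow> ereal" where
  "E_R N d \<psi> = (INF \<sigma>\<in>{\<sigma>. fully_separable N d \<sigma>}. neg_log_qf (tidx N d) \<sigma> \<psi>)"

text \<open>A scheme is a pair (pi, phi): pi is an ordering of the parties (step k measures party pi k),
  and phi k h i is the i-th basis vector (a function of the local index x < d (pi k)) used at step k
  after outcome history h (a list of the k previous outcomes).\<close>
definition adaptive_scheme ::
  "nat \<Rightarrow> (nat \<Rightarrow> nat) \<Rightarrow> (nat \<Rightarrow> nat) \<Rightarrow> (nat \<Rightarrow> nat list \<Rightarrow> nat \<Rightarrow> nat \<Rightarrow> complex) \<Rightarrow> bool" where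
  "adaptive_scheme N d \<pi> \<phi> \<longleftrightarrow>
     bij_betw \<pi> {..<N} {..<N} \<and>
     (\<forall>k<N. \<forall>h. length h = k \<and> (\<forall>m<k. h ! m < d (\<pi> m)) \<longrightarrow>
        orthonormal_basis {..<d (\<pi> k)} (\<phi> k h))"

text \<open>Outcome tuples (i_1,...,i_N), indexed by step.\<close>
definition outcomes :: "nat \<Rightarrow> (nat \<Rightarrow> nat) \<Rightarrow> (nat \<Rightarrow> nat) \<Rightarrow> (nat \<Rightarrow> nat) set" where
  "outcomes N d \<pi> = PiE {..<N} (\<lambda>k. {..<d (\<pi> k)})"

text \<open>Product outcome vector |e_i> = |phi^(1)_{i_1}> x ... x |phi^(N)_{i_N|i_1...i_{N-1}}>,
  the k-th factor living on party pi k.\<close>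
definition outcome_vec ::
  "nat \<Rightarrow> (nat \<Rightarrow> nat) \<Rightarrow> (nat \<Rightarrow> nat list \<Rightarrow> nat \<Rightarrow> nat \<Rightarrow> complex) \<Rightarrow> (nat \<Rightarrow> nat) \<Rightarrow> (nat \<Rightarrow> nat) \<Rightarrow> complex" where
  "outcome_vec N \<pi> \<phi> i x = (\<Prod>k<N. \<phi> k (map i [0..<k]) (i k) (x (\<pi> k)))"

definition outcome_prob ::
  "nat \<Rightarrow> (nat \<Rightarrow> nat) \<Rightarrow> (nat \<Rightarrow> nat) \<Rightarrow> (nat \<Rightarrow> nat list \<Rightarrow> nat \<Rightarrow> nat \<Rightarrow> complex) \<Rightarrow> ((nat \<Rightarrow> nat) \<Rightarrow> complex) \<Rightarrow> (nat \<Rightarrow> nat) \<Rightarrow> real" where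
  "outcome_prob N d \<pi> \<phi> \<psi> i = (cmod (braket (tidx N d) (outcome_vec N \<pi> \<phi> i) \<psi>))\<^sup>2"

definition shannon :: "'a set \<Rightarrow> ('a \<Rightarrow> real) \<Rightarrow> real" where
  "shannon A p = - (\<Sum>a\<in>A. if p a = 0 then 0 else p a * log 2 (p a))"

definition E_MB :: "nat \<Rightarrow> (nat \<Rightarrow> nat) \<Rightarrow> ((nat \<Rightarrow> nat) \<Rightarrow> complex) \<Rightarrow> ereal" where
  "E_MB N d \<psi> = (INF s\<in>{(\<pi>, \<phi>). adaptive_scheme N d \<pi> \<phi>}.
      ereal (shannon (outcomes N d (fst s)) (outcome_prob N d (fst s) (snd s) \<psi>)))"

definition omega_state ::
  "nat \<Rightarrow> (nat \<Rightarrow> nat) \<Rightarrow> (nat \<Rightarrow> nat) \<Rightarrow> (nat \<Rightarrow> nat list \<Rightarrow> nat \<Rightarrow> nat \<Rightarrow> complex) \<Rightarrow> ((nat \<Rightarrow> nat) \<Rightarrow> complex) \<Rightarrow> (nat \<Rightarrow> nat) \<Rightarrow> (nat \<Rightarrow> nat) \<Rightarrow> complex" where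
  "omega_state N d \<pi> \<phi> \<psi> x y =
     (\<Sum>i\<in>outcomes N d \<pi>. complex_of_real (outcome_prob N d \<pi> \<phi> \<psi> i) *
        outcome_vec N \<pi> \<phi> i x * cnj (outcome_vec N \<pi> \<phi> i y))"

end

theory Submission imports Defs "Jordan_Normal_Form.Determinant" begin

hide_const (open) Matrix.unit_vec

lemma complete_onb:
  fixes u :: "'k \<Rightarrow> 'i \<Rightarrow> complex"
  assumes finK: "finite K" and finS: "finite S" and card: "card K = card S"
  and orth: "\<forall>k\<in>K. \<forall>l\<in>K. (\<Sum>x\<in>S. cnj (u k x) * u l x) = (if k=l then 1 else 0)"
  and x: "x\<in>S" and y: "y\<in>S"
  shows "(\<Sum>k\<in>K. u k x * cnj (u k y)) = (if x=y then 1 else 0)"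
proof -
  define n where "n = card S"
  obtain f where f: "bij_betw f {0..<n} K" using ex_bij_betw_nat_finite[OF finK] card n_def by metis
  obtain g where g: "bij_betw g {0..<n} S" using ex_bij_betw_nat_finite[OF finS] n_def by metis
  define A :: "complex mat" where "A = Matrix.mat n n (\<lambda>(a,b). cnj (u (f a) (g b)))"
  define B :: "complex mat" where "B = Matrix.mat n n (\<lambda>(b,a). u (f a) (g b))"
  have AB: "A * B = 1\<^sub>m n"
  proof (rule eq_matI)
    fix a a' assume a: "a < dim_row (1\<^sub>m n)" and a': "a' < dim_col (1\<^sub>m n)"
    have "(A * B) $$ (a,a') = (\<Sum>b\<in>{0..<n}. cnj (u (f a) (g b)) * u (f a') (g b))"
      using a a' by (simp add: A_def B_def scalar_prod_def)
    also have "\<dots> = (\<Sum>z\<in>S. cnj (u (f a) z) * u (f a') z)"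
      by (rule sum.reindex_bij_betw[OF g])
    also have "\<dots> = (if f a = f a' then 1 else 0)"
      using orth f a a' by (auto simp: bij_betw_def)
    also have "\<dots> = 1\<^sub>m n $$ (a,a')"
      using f a a' by (auto simp: bij_betw_def inj_on_def)
    finally show "(A * B) $$ (a,a') = 1\<^sub>m n $$ (a,a')" .
  qed (auto simp: A_def B_def)
  have BA: "B * A = 1\<^sub>m n"
    by (rule mat_mult_left_right_inverse[OF _ _ AB]) (auto simp: A_def B_def)
  obtain b where b: "b < n" "g b = x" using g x by (auto simp: bij_betw_def)
  obtain b' where b': "b' < n" "g b' = y" using g y by (auto simp: bij_betw_def)
  have "(\<Sum>k\<in>K. u k x * cnj (u k y)) = (\<Sum>a\<in>{0..<n}. u (f a) x * cnj (u (f a) y))"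
    by (rule sum.reindex_bij_betw[OF f, symmetric])
  also have "\<dots> = (B * A) $$ (b,b')"
    using b b' by (simp add: A_def B_def scalar_prod_def)
  also have "\<dots> = (if x = y then 1 else 0)"
    using BA b b' g by (auto simp: bij_betw_def inj_on_def)
  finally show ?thesis .
qed


definition Bf :: "'i set \<Rightarrow> ('i \<Rightarrow> complex) \<Rightarrow> ('i \<Rightarrow> 'i \<Rightarrow> complex) \<Rightarrow> ('i \<Rightarrow> complex) \<Rightarrow> complex" where
  "Bf S u M w = (\<Sum>x\<in>S. \<Sum>y\<in>S. cnj (u x) * M x y * w y)"

lemma bil_cong: "(\<And>x y. x\<in>S \<Longrightarrow> y\<in>S \<Longrightarrow> M x y = M' x y) \<Longrightarrow> Bf S u M w = Bf S u M' w"
  unfolding Bf_def by (intro sum.cong refl) auto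

lemma bil_rank:
  assumes "finite S" "finite J"
  shows "Bf S u (\<lambda>x y. \<Sum>j\<in>J. c j * a j x * cnj (a j y)) w = (\<Sum>j\<in>J. c j * braket S u (a j) * braket S (a j) w)"
proof -
  have "Bf S u (\<lambda>x y. \<Sum>j\<in>J. c j * a j x * cnj (a j y)) w =
     (\<Sum>x\<in>S. \<Sum>y\<in>S. \<Sum>j\<in>J. c j * (cnj (u x) * a j x) * (cnj (a j y) * w y))"
    unfolding Bf_def by (simp add: sum_distrib_left sum_distrib_right mult_ac)
  also have "\<dots> = (\<Sum>x\<in>S. \<Sum>j\<in>J. \<Sum>y\<in>S. c j * (cnj (u x) * a j x) * (cnj (a j y) * w y))"
    by (rule sum.cong[OF refl], rule sum.swap)
  also have "\<dots> = (\<Sum>j\<in>J. \<Sum>x\<in>S. \<Sum>y\<in>S. c j * (cnj (u x) * a j x) * (cnj (a j y) * w y))"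
    by (rule sum.swap)
  also have "\<dots> = (\<Sum>j\<in>J. c j * braket S u (a j) * braket S (a j) w)"
    unfolding braket_def by (simp add: sum_distrib_left sum_distrib_right mult_ac)
  finally show ?thesis .
qed

lemma bil_id: "finite S \<Longrightarrow> Bf S u (\<lambda>x y. if x = y then 1 else 0) w = braket S u w"
proof -
  assume f: "finite S"
  have "Bf S u (\<lambda>x y. if x = y then 1 else 0) w = (\<Sum>x\<in>S. \<Sum>y\<in>S. if x = y then cnj (u x) * w y else 0)"
    unfolding Bf_def by (intro sum.cong refl) auto
  also have "\<dots> = braket S u w" using f by (simp add: braket_def)
  finally show ?thesis .
qed

lemma cnj_braket: "cnj (braket S u w) = braket S w u"
  unfolding braket_def by (simp add: mult.commute)

lemma key_identity:
  fixes e :: "'o \<Rightarrow> 'i \<Rightarrow> complex" and v :: "'i \<Rightarrow> 'i \<Rightarrow> complex"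
    and lam :: "'i \<Rightarrow> real" and p :: "'o \<Rightarrow> real" and g :: "real \<Rightarrow> real"
  assumes finO: "finite Ob" and finS: "finite S" and card: "card Ob = card S"
  and eorth: "\<forall>i\<in>Ob. \<forall>j\<in>Ob. braket S (e i) (e j) = (if i = j then 1 else 0)"
  and vorth: "orthonormal_basis S v"
  and p: "\<forall>i\<in>Ob. p i = (cmod (braket S (e i) \<psi>))\<^sup>2"
  and dec: "\<forall>x\<in>S. \<forall>y\<in>S. (\<Sum>i\<in>Ob. complex_of_real (p i) * e i x * cnj (e i y)) =
                (\<Sum>k\<in>S. complex_of_real (lam k) * v k x * cnj (v k y))"
  shows "(\<Sum>k\<in>S. (cmod (braket S (v k) \<psi>))\<^sup>2 * g (lam k)) = (\<Sum>i\<in>Ob. p i * g (p i))"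
proof -
  have ecomp: "(\<Sum>i\<in>Ob. 1 * e i x * cnj (e i y)) = (if x = y then 1 else 0)" if "x\<in>S" "y\<in>S" for x y
    using complete_onb[OF finO finS card eorth[unfolded braket_def] that] by simp
  have vcomp: "(\<Sum>k\<in>S. 1 * v k x * cnj (v k y)) = (if x = y then 1 else 0)" if "x\<in>S" "y\<in>S" for x y
    using complete_onb[OF finS finS refl vorth[unfolded orthonormal_basis_def braket_def] that] by simp
  have Ie: "braket S u w = (\<Sum>i\<in>Ob. braket S u (e i) * braket S (e i) w)" for u w
  proof -
    have "braket S u w = Bf S u (\<lambda>x y. if x = y then 1 else 0) w" using bil_id[OF finS] by simp
    also have "\<dots> = Bf S u (\<lambda>x y. \<Sum>i\<in>Ob. 1 * e i x * cnj (e i y)) w"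
      by (rule bil_cong) (simp only: ecomp)
    also have "\<dots> = (\<Sum>i\<in>Ob. braket S u (e i) * braket S (e i) w)"
      using bil_rank[OF finS finO, of u "\<lambda>_. 1" e w] by simp
    finally show ?thesis .
  qed
  have Iv: "braket S u w = (\<Sum>k\<in>S. braket S u (v k) * braket S (v k) w)" for u w
  proof -
    have "braket S u w = Bf S u (\<lambda>x y. if x = y then 1 else 0) w" using bil_id[OF finS] by simp
    also have "\<dots> = Bf S u (\<lambda>x y. \<Sum>k\<in>S. 1 * v k x * cnj (v k y)) w"
      by (rule bil_cong) (simp only: vcomp)
    also have "\<dots> = (\<Sum>k\<in>S. braket S u (v k) * braket S (v k) w)"
      using bil_rank[OF finS finS, of u "\<lambda>_. 1" v w] by simp
    finally show ?thesis .
  qed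
  have eig: "(p i - lam k) * braket S (e i) (v k) = 0" if i: "i\<in>Ob" and k: "k\<in>S" for i k
  proof -
    have "Bf S (e i) (\<lambda>x y. \<Sum>j\<in>Ob. complex_of_real (p j) * e j x * cnj (e j y)) (v k)
        = Bf S (e i) (\<lambda>x y. \<Sum>l\<in>S. complex_of_real (lam l) * v l x * cnj (v l y)) (v k)"
      by (rule bil_cong) (simp add: dec)
    hence "(\<Sum>j\<in>Ob. complex_of_real (p j) * braket S (e i) (e j) * braket S (e j) (v k))
         = (\<Sum>l\<in>S. complex_of_real (lam l) * braket S (e i) (v l) * braket S (v l) (v k))"
      by (simp add: bil_rank[OF finS finO] bil_rank[OF finS finS])
    moreover have "(\<Sum>j\<in>Ob. complex_of_real (p j) * braket S (e i) (e j) * braket S (e j) (v k))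
        = complex_of_real (p i) * braket S (e i) (v k)"
    proof -
      have "(\<Sum>j\<in>Ob. complex_of_real (p j) * braket S (e i) (e j) * braket S (e j) (v k))
        = (\<Sum>j\<in>Ob. if j = i then complex_of_real (p i) * braket S (e i) (v k) else 0)"
        using eorth i by (intro sum.cong refl) auto
      thus ?thesis using i finO by simp
    qed
    moreover have "(\<Sum>l\<in>S. complex_of_real (lam l) * braket S (e i) (v l) * braket S (v l) (v k))
        = complex_of_real (lam k) * braket S (e i) (v k)"
    proof -
      have "(\<Sum>l\<in>S. complex_of_real (lam l) * braket S (e i) (v l) * braket S (v l) (v k))
        = (\<Sum>l\<in>S. if l = k then complex_of_real (lam k) * braket S (e i) (v k) else 0)"
        using vorth k unfolding orthonormal_basis_def by (intro sum.cong refl) auto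
      thus ?thesis using k finS by simp
    qed
    ultimately show ?thesis by (simp add: algebra_simps)
  qed
  define a where "a k = braket S (v k) \<psi>" for k
  define b where "b i = braket S (e i) \<psi>" for i
  have ga: "complex_of_real (g (lam k)) * a k = (\<Sum>i\<in>Ob. braket S (v k) (e i) * complex_of_real (g (p i)) * b i)"
    if k: "k\<in>S" for k
  proof -
    have "complex_of_real (g (lam k)) * a k = (\<Sum>i\<in>Ob. complex_of_real (g (lam k)) * braket S (v k) (e i) * b i)"
      unfolding a_def b_def by (subst Ie) (simp add: sum_distrib_left mult_ac)
    also have "\<dots> = (\<Sum>i\<in>Ob. braket S (v k) (e i) * complex_of_real (g (p i)) * b i)"
    proof (rule sum.cong[OF refl])
      fix i assume i: "i\<in>Ob"
      show "complex_of_real (g (lam k)) * braket S (v k) (e i) * b i = braket S (v k) (e i) * complex_of_real (g (p i)) * b i"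
      proof (cases "braket S (v k) (e i) = 0")
        case False
        hence "braket S (e i) (v k) \<noteq> 0" using cnj_braket[of S "v k" "e i"] by (metis complex_cnj_zero_iff)
        hence "p i = lam k" using eig[OF i k] by simp
        thus ?thesis by simp
      qed simp
    qed
    finally show ?thesis .
  qed
  have cb: "(\<Sum>k\<in>S. cnj (a k) * braket S (v k) (e i)) = cnj (b i)" for i
    unfolding a_def b_def cnj_braket by (rule Iv[symmetric])
  have sq: "complex_of_real ((cmod z)\<^sup>2) = cnj z * z" for z
    by (metis complex_norm_square mult.commute)
  have "complex_of_real (\<Sum>k\<in>S. (cmod (a k))\<^sup>2 * g (lam k))
      = (\<Sum>k\<in>S. cnj (a k) * (complex_of_real (g (lam k)) * a k))"
    by (simp only: of_real_sum of_real_mult sq) (simp add: mult_ac)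
  also have "\<dots> = (\<Sum>k\<in>S. \<Sum>i\<in>Ob. cnj (a k) * braket S (v k) (e i) * (complex_of_real (g (p i)) * b i))"
  proof (intro sum.cong refl)
    fix k assume k: "k \<in> S"
    show "cnj (a k) * (complex_of_real (g (lam k)) * a k) = (\<Sum>i\<in>Ob. cnj (a k) * braket S (v k) (e i) * (complex_of_real (g (p i)) * b i))"
      by (subst ga[OF k]) (simp add: sum_distrib_left mult_ac)
  qed
  also have "\<dots> = (\<Sum>i\<in>Ob. \<Sum>k\<in>S. cnj (a k) * braket S (v k) (e i) * (complex_of_real (g (p i)) * b i))"
    by (rule sum.swap)
  also have "\<dots> = (\<Sum>i\<in>Ob. cnj (b i) * (complex_of_real (g (p i)) * b i))"
    by (simp add: sum_distrib_right[symmetric] cb)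
  also have "\<dots> = complex_of_real (\<Sum>i\<in>Ob. p i * g (p i))"
  proof -
    have "(\<Sum>i\<in>Ob. cnj (b i) * (complex_of_real (g (p i)) * b i)) = (\<Sum>i\<in>Ob. complex_of_real ((cmod (b i))\<^sup>2) * complex_of_real (g (p i)))"
      by (simp only: sq) (simp add: mult_ac)
    also have "\<dots> = complex_of_real (\<Sum>i\<in>Ob. p i * g (p i))"
      using p unfolding b_def of_real_sum of_real_mult by (intro sum.cong refl) simp
    finally show ?thesis .
  qed
  finally show ?thesis unfolding a_def by (simp only: of_real_eq_iff)
qed


lemma expand_onb:
  fixes e :: "'o \<Rightarrow> 'i \<Rightarrow> complex"
  assumes finO: "finite Ob" and finS: "finite S" and card: "card Ob = card S"
  and eorth: "\<forall>i\<in>Ob. \<forall>j\<in>Ob. braket S (e i) (e j) = (if i = j then 1 else 0)"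
  shows "braket S u w = (\<Sum>i\<in>Ob. braket S u (e i) * braket S (e i) w)"
proof -
  have ecomp: "(\<Sum>i\<in>Ob. 1 * e i x * cnj (e i y)) = (if x = y then 1 else 0)" if "x\<in>S" "y\<in>S" for x y
    using complete_onb[OF finO finS card eorth[unfolded braket_def] that] by simp
  have "braket S u w = Bf S u (\<lambda>x y. if x = y then 1 else 0) w" using bil_id[OF finS] by simp
  also have "\<dots> = Bf S u (\<lambda>x y. \<Sum>i\<in>Ob. 1 * e i x * cnj (e i y)) w"
    by (rule bil_cong) (simp only: ecomp)
  also have "\<dots> = (\<Sum>i\<in>Ob. braket S u (e i) * braket S (e i) w)"
    using bil_rank[OF finS finO, of u "\<lambda>_. 1" e w] by simp
  finally show ?thesis .
qed

lemma parseval: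
  fixes e :: "'o \<Rightarrow> 'i \<Rightarrow> complex"
  assumes finO: "finite Ob" and finS: "finite S" and card: "card Ob = card S"
  and eorth: "\<forall>i\<in>Ob. \<forall>j\<in>Ob. braket S (e i) (e j) = (if i = j then 1 else 0)"
  shows "(\<Sum>i\<in>Ob. (cmod (braket S (e i) \<psi>))\<^sup>2) = (\<Sum>x\<in>S. (cmod (\<psi> x))\<^sup>2)"
proof -
  have sq: "complex_of_real ((cmod z)\<^sup>2) = cnj z * z" for z
    by (metis complex_norm_square mult.commute)
  have "complex_of_real (\<Sum>i\<in>Ob. (cmod (braket S (e i) \<psi>))\<^sup>2) = (\<Sum>i\<in>Ob. braket S \<psi> (e i) * braket S (e i) \<psi>)"
    by (simp only: of_real_sum sq cnj_braket)
  also have "\<dots> = braket S \<psi> \<psi>" by (rule expand_onb[OF assms, symmetric])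
  also have "\<dots> = complex_of_real (\<Sum>x\<in>S. (cmod (\<psi> x))\<^sup>2)"
    unfolding braket_def by (simp only: of_real_sum sq)
  finally show ?thesis by (simp only: of_real_eq_iff)
qed

lemma sum_tidx_prod:
  fixes F :: "nat \<Rightarrow> nat \<Rightarrow> complex"
  assumes bij: "bij_betw \<pi> {..<N} {..<N}"
  shows "(\<Sum>x\<in>tidx N d. \<Prod>k<N. F k (x (\<pi> k))) = (\<Prod>k<N. \<Sum>a<d (\<pi> k). F k a)"
proof -
  define r where "r = inv_into {..<N} \<pi>"
  have r: "k < N \<Longrightarrow> r (\<pi> k) = k" for k
    using bij unfolding r_def bij_betw_def by (simp add: inv_into_f_f)
  have "(\<Prod>k<N. F k (x (\<pi> k))) = (\<Prod>j<N. F (r j) (x j))" for x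
  proof -
    have "(\<Prod>k<N. F k (x (\<pi> k))) = (\<Prod>k<N. (\<lambda>j. F (r j) (x j)) (\<pi> k))"
      by (intro prod.cong refl) (simp add: r)
    also have "\<dots> = (\<Prod>j<N. F (r j) (x j))" by (rule prod.reindex_bij_betw[OF bij])
    finally show ?thesis .
  qed
  hence "(\<Sum>x\<in>tidx N d. \<Prod>k<N. F k (x (\<pi> k))) = (\<Sum>x\<in>tidx N d. \<Prod>j<N. F (r j) (x j))" by simp
  also have "\<dots> = (\<Prod>j<N. \<Sum>a<d j. F (r j) a)"
    unfolding tidx_def by (rule prod_sum_PiE[symmetric]) auto
  also have "\<dots> = (\<Prod>k<N. (\<lambda>j. \<Sum>a<d j. F (r j) a) (\<pi> k))"
    by (rule prod.reindex_bij_betw[OF bij, symmetric])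
  also have "\<dots> = (\<Prod>k<N. \<Sum>a<d (\<pi> k). F k a)"
    by (intro prod.cong refl) (simp add: r)
  finally show ?thesis .
qed

lemma braket_outcome:
  assumes bij: "bij_betw \<pi> {..<N} {..<N}"
  shows "braket (tidx N d) (outcome_vec N \<pi> \<phi> i) (outcome_vec N \<pi> \<phi> j) =
    (\<Prod>k<N. braket {..<d (\<pi> k)} (\<phi> k (map i [0..<k]) (i k)) (\<phi> k (map j [0..<k]) (j k)))"
proof -
  have "braket (tidx N d) (outcome_vec N \<pi> \<phi> i) (outcome_vec N \<pi> \<phi> j) =
     (\<Sum>x\<in>tidx N d. \<Prod>k<N. (\<lambda>k a. cnj (\<phi> k (map i [0..<k]) (i k) a) * \<phi> k (map j [0..<k]) (j k) a) k (x (\<pi> k)))"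
    unfolding braket_def outcome_vec_def by (simp add: prod.distrib)
  also have "\<dots> = (\<Prod>k<N. \<Sum>a<d (\<pi> k). cnj (\<phi> k (map i [0..<k]) (i k) a) * \<phi> k (map j [0..<k]) (j k) a)"
    by (rule sum_tidx_prod[OF bij])
  finally show ?thesis unfolding braket_def .
qed

lemma phi_onb:
  assumes "adaptive_scheme N d \<pi> \<phi>" "i \<in> outcomes N d \<pi>" "k < N"
  shows "orthonormal_basis {..<d (\<pi> k)} (\<phi> k (map i [0..<k]))"
proof -
  have "length (map i [0..<k]) = k \<and> (\<forall>m<k. map i [0..<k] ! m < d (\<pi> m))"
    using assms(2,3) by (auto simp: outcomes_def PiE_iff)
  thus ?thesis using assms(1,3) unfolding adaptive_scheme_def by blast
qed

lemma outcome_orth: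
  assumes A: "adaptive_scheme N d \<pi> \<phi>" and i: "i \<in> outcomes N d \<pi>" and j: "j \<in> outcomes N d \<pi>"
  shows "braket (tidx N d) (outcome_vec N \<pi> \<phi> i) (outcome_vec N \<pi> \<phi> j) = (if i = j then 1 else 0)"
proof -
  have bij: "bij_betw \<pi> {..<N} {..<N}" using A unfolding adaptive_scheme_def by blast
  have ik: "i k < d (\<pi> k)" "j k < d (\<pi> k)" if "k < N" for k
    using i j that by (auto simp: outcomes_def PiE_iff)
  show ?thesis
  proof (cases "i = j")
    case True
    have "(\<Prod>k<N. braket {..<d (\<pi> k)} (\<phi> k (map i [0..<k]) (i k)) (\<phi> k (map i [0..<k]) (i k))) = (\<Prod>k<N. 1)"
      using phi_onb[OF A i] ik unfolding orthonormal_basis_def by (intro prod.cong refl) auto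
    thus ?thesis using True braket_outcome[OF bij] by simp
  next
    case False
    have "\<exists>k<N. i k \<noteq> j k"
    proof (rule ccontr)
      assume "\<not> ?thesis"
      hence "i x = j x" for x using i j by (cases "x < N") (auto simp: outcomes_def PiE_iff extensional_def)
      thus False using False by auto
    qed
    then obtain k0 where "k0 < N \<and> i k0 \<noteq> j k0" by blast
    define m where "m = (LEAST k. k < N \<and> i k \<noteq> j k)"
    have m: "m < N" "i m \<noteq> j m" using LeastI[of "\<lambda>k. k < N \<and> i k \<noteq> j k", OF \<open>k0 < N \<and> i k0 \<noteq> j k0\<close>]
      unfolding m_def by auto
    have lt: "i m' = j m'" if "m' < m" for m'
      using not_less_Least[of m' "\<lambda>k. k < N \<and> i k \<noteq> j k"] that m unfolding m_def[symmetric] by auto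
    have eqh: "map i [0..<m] = map j [0..<m]" using lt by simp
    have "braket {..<d (\<pi> m)} (\<phi> m (map i [0..<m]) (i m)) (\<phi> m (map j [0..<m]) (j m)) = 0"
      unfolding eqh[symmetric] using phi_onb[OF A i m(1)] ik[OF m(1)] m(2) unfolding orthonormal_basis_def by auto
    hence "(\<Prod>k<N. braket {..<d (\<pi> k)} (\<phi> k (map i [0..<k]) (i k)) (\<phi> k (map j [0..<k]) (j k))) = 0"
      using m(1) by (intro prod_zero) auto
    thus ?thesis using False braket_outcome[OF bij] by simp
  qed
qed

lemma card_outcomes:
  assumes bij: "bij_betw \<pi> {..<N} {..<N}"
  shows "card (outcomes N d \<pi>) = card (tidx N d)"
proof -
  have "card (outcomes N d \<pi>) = (\<Prod>k<N. d (\<pi> k))" unfolding outcomes_def by (simp add: card_PiE)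
  also have "\<dots> = (\<Prod>j<N. d j)" by (rule prod.reindex_bij_betw[OF bij])
  also have "\<dots> = card (tidx N d)" unfolding tidx_def by (simp add: card_PiE)
  finally show ?thesis .
qed


lemma prob_sum:
  assumes A: "adaptive_scheme N d \<pi> \<phi>" and u: "unit_vec (tidx N d) \<psi>"
  shows "(\<Sum>i\<in>outcomes N d \<pi>. outcome_prob N d \<pi> \<phi> \<psi> i) = 1"
proof -
  have bij: "bij_betw \<pi> {..<N} {..<N}" using A unfolding adaptive_scheme_def by blast
  have "(\<Sum>i\<in>outcomes N d \<pi>. outcome_prob N d \<pi> \<phi> \<psi> i) = (\<Sum>x\<in>tidx N d. (cmod (\<psi> x))\<^sup>2)"
    unfolding outcome_prob_def
  proof (rule parseval)
    show "finite (outcomes N d \<pi>)" unfolding outcomes_def by (intro finite_PiE) auto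
    show "finite (tidx N d)" unfolding tidx_def by (intro finite_PiE) auto
    show "card (outcomes N d \<pi>) = card (tidx N d)" by (rule card_outcomes[OF bij])
    show "\<forall>i\<in>outcomes N d \<pi>. \<forall>j\<in>outcomes N d \<pi>. braket (tidx N d) (outcome_vec N \<pi> \<phi> i) (outcome_vec N \<pi> \<phi> j) = (if i = j then 1 else 0)"
      using outcome_orth[OF A] by blast
  qed
  thus ?thesis using u unfolding Defs.unit_vec_def by simp
qed

lemma omega_sep:
  assumes A: "adaptive_scheme N d \<pi> \<phi>" and u: "unit_vec (tidx N d) \<psi>"
  shows "fully_separable N d (omega_state N d \<pi> \<phi> \<psi>)"
proof -
  have bij: "bij_betw \<pi> {..<N} {..<N}" using A unfolding adaptive_scheme_def by blast
  define Ob where "Ob = outcomes N d \<pi>"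
  have finO: "finite Ob" unfolding Ob_def outcomes_def by (intro finite_PiE) auto
  obtain enum where en: "bij_betw enum {0..<card Ob} Ob" using ex_bij_betw_nat_finite[OF finO] by blast
  define r where "r = inv_into {..<N} \<pi>"
  have r1: "k < N \<Longrightarrow> r (\<pi> k) = k" for k
    using bij unfolding r_def bij_betw_def by (simp add: inv_into_f_f)
  have r2: "j < N \<Longrightarrow> r j < N \<and> \<pi> (r j) = j" for j
    using bij unfolding r_def by (metis bij_betw_def bij_betw_inv_into_right inv_into_into lessThan_iff)
  define fv where "fv i kk = \<phi> kk (map i [0..<kk]) (i kk)" for i kk
  define \<rho> where "\<rho> k j a b = fv (enum k) (r j) a * cnj (fv (enum k) (r j) b)" for k j a b
  define p where "p = outcome_prob N d \<pi> \<phi> \<psi>"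
  define e where "e = outcome_vec N \<pi> \<phi>"
  show ?thesis unfolding fully_separable_def
  proof (intro exI[of _ "card Ob"] exI[of _ "\<lambda>k. p (enum k)"] exI[of _ \<rho>] conjI allI impI ballI)
    fix k assume "k < card Ob" thus "0 \<le> p (enum k)" by (simp add: p_def outcome_prob_def)
  next
    have "(\<Sum>k<card Ob. p (enum k)) = (\<Sum>i\<in>Ob. p i)"
      unfolding lessThan_atLeast0 by (rule sum.reindex_bij_betw[OF en])
    thus "(\<Sum>k<card Ob. p (enum k)) = 1" using prob_sum[OF A u] unfolding p_def Ob_def by simp
  next
    fix k j assume k: "k < card Ob" and j: "j < N"
    have i: "enum k \<in> outcomes N d \<pi>" using en k unfolding Ob_def bij_betw_def by auto
    have kk: "r j < N" "\<pi> (r j) = j" using r2[OF j] by auto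
    have onb: "orthonormal_basis {..<d j} (\<phi> (r j) (map (enum k) [0..<r j]))"
      using phi_onb[OF A i kk(1)] kk(2) by simp
    have ik: "enum k (r j) < d j" using i kk unfolding outcomes_def by (metis PiE_iff lessThan_iff)
    define f where "f = fv (enum k) (r j)"
    have rf: "\<rho> k j a b = f a * cnj (f b)" for a b unfolding \<rho>_def f_def by simp
    have nf: "(\<Sum>a<d j. cnj (f a) * f a) = 1"
      using onb ik unfolding orthonormal_basis_def braket_def f_def fv_def by auto
    show "density_matrix {..<d j} (\<rho> k j)"
      unfolding density_matrix_def
    proof (intro conjI allI ballI)
      fix x y show "\<rho> k j y x = cnj (\<rho> k j x y)" by (simp add: rf mult.commute)
    next
      fix v :: "nat \<Rightarrow> complex"
      define c where "c = (\<Sum>x<d j. cnj (v x) * f x)"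
      have "c * cnj c = (\<Sum>x<d j. \<Sum>y<d j. (cnj (v x) * f x) * cnj (cnj (v y) * f y))"
        unfolding c_def cnj_sum by (rule sum_product)
      also have "\<dots> = (\<Sum>x<d j. \<Sum>y<d j. cnj (v x) * \<rho> k j x y * v y)"
        by (intro sum.cong refl) (simp add: rf)
      finally have "(\<Sum>x<d j. \<Sum>y<d j. cnj (v x) * \<rho> k j x y * v y) = c * cnj c" by simp
      also have "\<dots> = complex_of_real ((cmod c)\<^sup>2)" by (rule complex_norm_square[symmetric])
      finally show "0 \<le> Re (\<Sum>x<d j. \<Sum>y<d j. cnj (v x) * \<rho> k j x y * v y)" by simp
    next
      show "(\<Sum>x<d j. \<rho> k j x x) = 1" using nf by (simp add: rf mult.commute)
    qed
  next
    fix x y assume x: "x \<in> tidx N d" and y: "y \<in> tidx N d"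
    have hterm: "e i x * cnj (e i y) = (\<Prod>j<N. \<rho> k j (x j) (y j))" if "i = enum k" for i k
    proof -
      have "e i x * cnj (e i y) = (\<Prod>kk<N. fv i kk (x (\<pi> kk)) * cnj (fv i kk (y (\<pi> kk))))"
        unfolding e_def outcome_vec_def fv_def by (simp add: prod.distrib)
      also have "\<dots> = (\<Prod>kk<N. (\<lambda>j. \<rho> k j (x j) (y j)) (\<pi> kk))"
        by (intro prod.cong refl) (simp add: \<rho>_def r1 that)
      also have "\<dots> = (\<Prod>j<N. \<rho> k j (x j) (y j))" by (rule prod.reindex_bij_betw[OF bij])
      finally show ?thesis .
    qed
    have "omega_state N d \<pi> \<phi> \<psi> x y = (\<Sum>i\<in>Ob. complex_of_real (p i) * (e i x * cnj (e i y)))"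
      unfolding omega_state_def Ob_def p_def e_def by (simp add: mult_ac)
    also have "\<dots> = (\<Sum>k\<in>{0..<card Ob}. complex_of_real (p (enum k)) * (e (enum k) x * cnj (e (enum k) y)))"
      by (rule sum.reindex_bij_betw[OF en, symmetric])
    also have "\<dots> = (\<Sum>k<card Ob. complex_of_real (p (enum k)) * (\<Prod>j<N. \<rho> k j (x j) (y j)))"
      by (simp add: hterm atLeast0LessThan)
    finally show "omega_state N d \<pi> \<phi> \<psi> x y = (\<Sum>k<card Ob. complex_of_real (p (enum k)) * (\<Prod>j<N. \<rho> k j (x j) (y j)))" .
  qed
qed


lemma omega_neglog:
  assumes A: "adaptive_scheme N d \<pi> \<phi>" and u: "unit_vec (tidx N d) \<psi>"
  shows "neg_log_qf (tidx N d) (omega_state N d \<pi> \<phi> \<psi>) \<psi> =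
          ereal (shannon (outcomes N d \<pi>) (outcome_prob N d \<pi> \<phi> \<psi>))"
proof -
  have bij: "bij_betw \<pi> {..<N} {..<N}" using A unfolding adaptive_scheme_def by blast
  define S where "S = tidx N d"
  define Ob where "Ob = outcomes N d \<pi>"
  define e where "e = outcome_vec N \<pi> \<phi>"
  define p where "p = outcome_prob N d \<pi> \<phi> \<psi>"
  define \<sigma> where "\<sigma> = omega_state N d \<pi> \<phi> \<psi>"
  have finO: "finite Ob" unfolding Ob_def outcomes_def by (intro finite_PiE) auto
  have finS: "finite S" unfolding S_def tidx_def by (intro finite_PiE) auto
  have card: "card Ob = card S" unfolding Ob_def S_def by (rule card_outcomes[OF bij])
  have eorth: "\<forall>i\<in>Ob. \<forall>j\<in>Ob. braket S (e i) (e j) = (if i = j then 1 else 0)"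
    using outcome_orth[OF A] unfolding Ob_def S_def e_def by blast
  have pdef: "\<forall>i\<in>Ob. p i = (cmod (braket S (e i) \<psi>))\<^sup>2"
    unfolding p_def outcome_prob_def S_def e_def by simp
  have pnn: "p i \<ge> 0" for i unfolding p_def outcome_prob_def by simp
  have sig: "\<sigma> x y = (\<Sum>i\<in>Ob. complex_of_real (p i) * e i x * cnj (e i y))" for x y
    unfolding \<sigma>_def omega_state_def Ob_def p_def e_def by simp
  define P where "P = (\<lambda>(v, lam). orthonormal_basis S v \<and>
             (\<forall>x\<in>S. \<forall>y\<in>S. \<sigma> x y = (\<Sum>k\<in>S. complex_of_real (lam k) * v k x * cnj (v k y))))"
  have ex: "\<exists>z. P z"
  proof -
    obtain \<tau> where \<tau>: "bij_betw \<tau> S Ob" using finite_same_card_bij[OF finS finO card[symmetric]] by blast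
    have "P (\<lambda>x. e (\<tau> x), \<lambda>x. p (\<tau> x))"
      unfolding P_def
    proof (simp only: case_prod_conv, intro conjI ballI)
      show "orthonormal_basis S (\<lambda>x. e (\<tau> x))"
        unfolding orthonormal_basis_def using eorth \<tau> unfolding bij_betw_def inj_on_def by auto
    next
      fix x y assume "x \<in> S" "y \<in> S"
      have "\<sigma> x y = (\<Sum>i\<in>Ob. complex_of_real (p i) * e i x * cnj (e i y))" by (rule sig)
      also have "\<dots> = (\<Sum>k\<in>S. complex_of_real (p (\<tau> k)) * e (\<tau> k) x * cnj (e (\<tau> k) y))"
        by (rule sum.reindex_bij_betw[OF \<tau>, symmetric])
      finally show "\<sigma> x y = (\<Sum>k\<in>S. complex_of_real (p (\<tau> k)) * e (\<tau> k) x * cnj (e (\<tau> k) y))" .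
    qed
    thus ?thesis by blast
  qed
  obtain v lam where vl: "(SOME z. P z) = (v, lam)" by (cases "SOME z. P z") auto
  have Pvl: "P (v, lam)" using someI_ex[OF ex] vl by simp
  hence vorth: "orthonormal_basis S v" and dec0: "\<forall>x\<in>S. \<forall>y\<in>S. \<sigma> x y = (\<Sum>k\<in>S. complex_of_real (lam k) * v k x * cnj (v k y))"
    unfolding P_def by auto
  have dec: "\<forall>x\<in>S. \<forall>y\<in>S. (\<Sum>i\<in>Ob. complex_of_real (p i) * e i x * cnj (e i y)) =
                (\<Sum>k\<in>S. complex_of_real (lam k) * v k x * cnj (v k y))"
    using dec0 sig by simp
  note key = key_identity[OF finO finS card eorth vorth pdef dec]
  have nz: "braket S (v k) \<psi> = 0" if k: "k \<in> S" "lam k \<le> 0" for k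
  proof -
    define g :: "real \<Rightarrow> real" where "g t = (if t \<le> 0 then 1 else 0)" for t
    have "(\<Sum>i\<in>Ob. p i * g (p i)) = 0"
      by (rule sum.neutral) (use pnn in \<open>auto simp: g_def intro: antisym\<close>)
    hence "(\<Sum>k\<in>S. (cmod (braket S (v k) \<psi>))\<^sup>2 * g (lam k)) = 0" using key by simp
    hence "(cmod (braket S (v k) \<psi>))\<^sup>2 * g (lam k) = 0"
      using sum_nonneg_eq_0_iff[OF finS, of "\<lambda>k. (cmod (braket S (v k) \<psi>))\<^sup>2 * g (lam k)"] k
      by (auto simp: g_def)
    thus ?thesis using k by (simp add: g_def)
  qed
  define g :: "real \<Rightarrow> real" where "g t = (if t > 0 then - log 2 t else 0)" for t
  have "(\<Sum>k\<in>{k\<in>S. lam k > 0}. (cmod (braket S (v k) \<psi>))\<^sup>2 * (- log 2 (lam k)))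
      = (\<Sum>k\<in>S. (cmod (braket S (v k) \<psi>))\<^sup>2 * g (lam k))"
    by (simp add: sum.inter_filter[OF finS] g_def) (intro sum.cong refl, simp)
  also have "\<dots> = (\<Sum>i\<in>Ob. p i * g (p i))" by (rule key)
  also have "\<dots> = shannon Ob p"
    unfolding shannon_def sum_negf[symmetric]
    by (intro sum.cong refl) (use pnn in \<open>auto simp: g_def order_le_less\<close>)
  finally have val: "(\<Sum>k\<in>{k\<in>S. lam k > 0}. (cmod (braket S (v k) \<psi>))\<^sup>2 * (- log 2 (lam k))) = shannon Ob p" .
  have "neg_log_qf S \<sigma> \<psi> = (if (\<exists>k\<in>S. lam k \<le> 0 \<and> braket S (v k) \<psi> \<noteq> 0) then \<infinity>
         else ereal (\<Sum>k\<in>{k\<in>S. lam k > 0}. (cmod (braket S (v k) \<psi>))\<^sup>2 * (- log 2 (lam k))))"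
    using vl unfolding neg_log_qf_def P_def Let_def by simp
  also have "\<dots> = ereal (shannon Ob p)" using nz val by auto
  finally show ?thesis unfolding S_def \<sigma>_def Ob_def p_def .
qed

theorem mainTheorem3:
  fixes N :: nat and d :: "nat \<Rightarrow> nat" and \<psi> :: "(nat \<Rightarrow> nat) \<Rightarrow> complex"
  assumes "unit_vec (tidx N d) \<psi>"
  shows "E_MB N d \<psi> \<ge> E_R N d \<psi> \<and>
    (\<forall>\<pi> \<phi>. adaptive_scheme N d \<pi> \<phi> \<longrightarrow>
        fully_separable N d (omega_state N d \<pi> \<phi> \<psi>) \<and>
        neg_log_qf (tidx N d) (omega_state N d \<pi> \<phi> \<psi>) \<psi> =
          ereal (shannon (outcomes N d \<pi>) (outcome_prob N d \<pi> \<phi> \<psi>)))"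
proof -
  have H: "\<forall>\<pi> \<phi>. adaptive_scheme N d \<pi> \<phi> \<longrightarrow>
        fully_separable N d (omega_state N d \<pi> \<phi> \<psi>) \<and>
        neg_log_qf (tidx N d) (omega_state N d \<pi> \<phi> \<psi>) \<psi> =
          ereal (shannon (outcomes N d \<pi>) (outcome_prob N d \<pi> \<phi> \<psi>))"
    using omega_sep[OF _ assms] omega_neglog[OF _ assms] by blast
  have "E_R N d \<psi> \<le> E_MB N d \<psi>"
    unfolding E_MB_def
  proof (rule INF_greatest)
    fix s assume "s \<in> {(\<pi>, \<phi>). adaptive_scheme N d \<pi> \<phi>}"
    then obtain \<pi> \<phi> where s: "s = (\<pi>, \<phi>)" and A: "adaptive_scheme N d \<pi> \<phi>" by auto
    have "E_R N d \<psi> \<le> neg_log_qf (tidx N d) (omega_state N d \<pi> \<phi> \<psi>) \<psi>"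
      unfolding E_R_def by (rule INF_lower) (use H A in simp)
    also have "\<dots> = ereal (shannon (outcomes N d \<pi>) (outcome_prob N d \<pi> \<phi> \<psi>))" using H A by blast
    finally show "E_R N d \<psi> \<le> ereal (shannon (outcomes N d (fst s)) (outcome_prob N d (fst s) (snd s) \<psi>))"
      using s by simp
  qed
  with H show ?thesis by blast
qed

end
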